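(* Let $\mathbb{K}$ be a field of characteristic $2$, let $(A,L,\theta_L)$ be a restricted Lie–Rinehart algebra, let $(A,M,\theta_M)$ be a strongly abelian restricted Lie–Rinehart algebra, and let $0\to(A,M,\theta_M)\xrightarrow{\iota}(A,E,\theta_E)\xrightarrow{\pi}(A,L,\theta_L)\to0$ be an abelian extension. Then $(M,\rho)$ is a restricted Lie–Rinehart module over $(A,L,\theta_L)$, where $\rho:L\to\mathrm{End}(M)$ is defined by $\rho(x)(m)=\iota^{-1}([\tilde x,\iota(m)]_E)$ for $x\in L$, $m\in M$, with $\tilde x\in E$ such that $\pi(\tilde x)=x$.
   Context: $\mathbb{K}$ has characteristic $2$. Restricted Lie algebra: Lie algebra with $x\mapsto x^{[2]}$, $(\lambda x)^{[2]}=\lambda^2x^{[2]}$, $\mathrm{ad}_{x^{[2]}}=\mathrm{ad}_x^2$, $(x+y)^{[2]}=x^{[2]}+y^{[2]}+[x,y]$. Restricted Lie–Rinehart algebra $(A,L,\theta)$: $A$ commutative associative, $L$ restricted Lie algebra and $A$-module, $\theta:L\to\mathrm{Der}(A)$ an $A$-linear restricted Lie morphism ($\mathrm{Der}(A)$ with commutator and $D^{[2]}=D^2$) with $[x,ay]=a[x,y]+\theta(x)(a)y$ and $(ax)^{[2]}=a^2x^{[2]}+\theta(ax)(a)x$. Morphisms: $A$-linear restricted Lie morphisms $f$ with $\theta_H\circ f=\theta_L$. Strongly abelian: $[m,n]=0$, $m^{[2]}=0$ for all $m,n$. An abelian extension is a short exact sequence of restricted Lie–Rinehart algebras over the same $A$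 as in the claim. A restricted Lie–Rinehart module over $(A,L,\theta_L)$: an $A$-module $M$ with a restricted Lie morphism $\rho:L\to\mathrm{End}(M)$ (i.e. $\rho([x,y])=[\rho(x),\rho(y)]$, $\rho(x^{[2]})=\rho(x)^2$) such that $\rho(x)(am)=a\rho(x)(m)+\theta_L(x)(a)m$. *)

theory Defs
  imports Main
begin

text \<open>The ground field K is a type 'k::field with (2::'k) = 0.
The commutative associative K-algebra A is a type 'a::comm_ring_1 together with a
ring homomorphism kappa : K -> A (the structure map); K-scalar multiplication on any
A-module is multiplication by kappa c. Each Lie-Rinehart algebra / module is a type
(its carrier is the whole type) with additive group structure from ab_group_add and
explicit A-action s, bracket b, 2-map p and anchor theta.\<close>

definition K_algebra :: "('k::field \<Rightarrow> 'a::comm_ring_1) \<Rightarrow> bool" where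
  "K_algebra \<kappa> \<longleftrightarrow> (\<forall>c d. \<kappa> (c + d) = \<kappa> c + \<kappa> d \<and> \<kappa> (c * d) = \<kappa> c * \<kappa> d) \<and> \<kappa> 1 = 1"

definition A_module :: "('a::comm_ring_1 \<Rightarrow> 'v::ab_group_add \<Rightarrow> 'v) \<Rightarrow> bool" where
  "A_module s \<longleftrightarrow> (\<forall>a b v w. s a (v + w) = s a v + s a w \<and> s (a + b) v = s a v + s b v
      \<and> s (a * b) v = s a (s b v) \<and> s 1 v = v)"

definition K_linear :: "('k::field \<Rightarrow> 'a::comm_ring_1) \<Rightarrow> ('a \<Rightarrow> 'v::ab_group_add \<Rightarrow> 'v)
    \<Rightarrow> ('a \<Rightarrow> 'w::ab_group_add \<Rightarrow> 'w) \<Rightarrow> ('v \<Rightarrow> 'w) \<Rightarrow> bool" where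
  "K_linear \<kappa> s s' f \<longleftrightarrow> (\<forall>v w. f (v + w) = f v + f w) \<and> (\<forall>c v. f (s (\<kappa> c) v) = s' (\<kappa> c) (f v))"

definition A_linear :: "('a::comm_ring_1 \<Rightarrow> 'v::ab_group_add \<Rightarrow> 'v)
    \<Rightarrow> ('a \<Rightarrow> 'w::ab_group_add \<Rightarrow> 'w) \<Rightarrow> ('v \<Rightarrow> 'w) \<Rightarrow> bool" where
  "A_linear s s' f \<longleftrightarrow> (\<forall>v w. f (v + w) = f v + f w) \<and> (\<forall>a v. f (s a v) = s' a (f v))"

definition lie_algebra :: "('k::field \<Rightarrow> 'a::comm_ring_1) \<Rightarrow> ('a \<Rightarrow> 'l::ab_group_add \<Rightarrow> 'l)
    \<Rightarrow> ('l \<Rightarrow> 'l \<Rightarrow> 'l) \<Rightarrow> bool" where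
  "lie_algebra \<kappa> s b \<longleftrightarrow>
     (\<forall>x y z. b (x + y) z = b x z + b y z \<and> b x (y + z) = b x y + b x z) \<and>
     (\<forall>c x y. b (s (\<kappa> c) x) y = s (\<kappa> c) (b x y) \<and> b x (s (\<kappa> c) y) = s (\<kappa> c) (b x y)) \<and>
     (\<forall>x. b x x = 0) \<and>
     (\<forall>x y z. b x (b y z) + b y (b z x) + b z (b x y) = 0)"

definition restricted_lie :: "('k::field \<Rightarrow> 'a::comm_ring_1) \<Rightarrow> ('a \<Rightarrow> 'l::ab_group_add \<Rightarrow> 'l)
    \<Rightarrow> ('l \<Rightarrow> 'l \<Rightarrow> 'l) \<Rightarrow> ('l \<Rightarrow> 'l) \<Rightarrow> bool" where
  "restricted_lie \<kappa> s b p \<longleftrightarrow> lie_algebra \<kappa> s b \<and>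
     (\<forall>c x. p (s (\<kappa> c) x) = s ((\<kappa> c)\<^sup>2) (p x)) \<and>
     (\<forall>x y. b (p x) y = b x (b x y)) \<and>
     (\<forall>x y. p (x + y) = p x + p y + b x y)"

definition derivation :: "('k::field \<Rightarrow> 'a::comm_ring_1) \<Rightarrow> ('a \<Rightarrow> 'a) \<Rightarrow> bool" where
  "derivation \<kappa> D \<longleftrightarrow> (\<forall>a b. D (a + b) = D a + D b) \<and> (\<forall>c a. D (\<kappa> c * a) = \<kappa> c * D a) \<and>
     (\<forall>a b. D (a * b) = a * D b + D a * b)"

definition restricted_LR :: "('k::field \<Rightarrow> 'a::comm_ring_1) \<Rightarrow> ('a \<Rightarrow> 'l::ab_group_add \<Rightarrow> 'l)
    \<Rightarrow> ('l \<Rightarrow> 'l \<Rightarrow> 'l) \<Rightarrow> ('l \<Rightarrow> 'l) \<Rightarrow> ('l \<Rightarrow> 'a \<Rightarrow> 'a) \<Rightarrow> bool" where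
  "restricted_LR \<kappa> s b p \<theta> \<longleftrightarrow>
     A_module s \<and> restricted_lie \<kappa> s b p \<and>
     (\<forall>x. derivation \<kappa> (\<theta> x)) \<and>
     (\<forall>x y. \<theta> (x + y) = (\<lambda>a. \<theta> x a + \<theta> y a)) \<and>
     (\<forall>a x. \<theta> (s a x) = (\<lambda>c. a * \<theta> x c)) \<and>
     (\<forall>x y. \<theta> (b x y) = (\<lambda>a. \<theta> x (\<theta> y a) - \<theta> y (\<theta> x a))) \<and>
     (\<forall>x. \<theta> (p x) = (\<lambda>a. \<theta> x (\<theta> x a))) \<and>
     (\<forall>x a y. b x (s a y) = s a (b x y) + s (\<theta> x a) y) \<and>
     (\<forall>a x. p (s a x) = s (a\<^sup>2) (p x) + s (\<theta> (s a x) a) x)"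

definition LR_morphism :: "('a::comm_ring_1 \<Rightarrow> 'l::ab_group_add \<Rightarrow> 'l) \<Rightarrow> ('l \<Rightarrow> 'l \<Rightarrow> 'l) \<Rightarrow> ('l \<Rightarrow> 'l)
    \<Rightarrow> ('l \<Rightarrow> 'a \<Rightarrow> 'a) \<Rightarrow> ('a \<Rightarrow> 'h::ab_group_add \<Rightarrow> 'h) \<Rightarrow> ('h \<Rightarrow> 'h \<Rightarrow> 'h) \<Rightarrow> ('h \<Rightarrow> 'h)
    \<Rightarrow> ('h \<Rightarrow> 'a \<Rightarrow> 'a) \<Rightarrow> ('l \<Rightarrow> 'h) \<Rightarrow> bool" where
  "LR_morphism sL bL pL \<theta>L sH bH pH \<theta>H f \<longleftrightarrow>
     A_linear sL sH f \<and> (\<forall>x y. f (bL x y) = bH (f x) (f y)) \<and> (\<forall>x. f (pL x) = pH (f x)) \<and>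
     (\<forall>x. \<theta>H (f x) = \<theta>L x)"

definition strongly_abelian :: "('m::ab_group_add \<Rightarrow> 'm \<Rightarrow> 'm) \<Rightarrow> ('m \<Rightarrow> 'm) \<Rightarrow> bool" where
  "strongly_abelian b p \<longleftrightarrow> (\<forall>m n. b m n = 0) \<and> (\<forall>m. p m = 0)"

definition abelian_extension :: "('k::field \<Rightarrow> 'a::comm_ring_1)
    \<Rightarrow> ('a \<Rightarrow> 'm::ab_group_add \<Rightarrow> 'm) \<Rightarrow> ('m \<Rightarrow> 'm \<Rightarrow> 'm) \<Rightarrow> ('m \<Rightarrow> 'm) \<Rightarrow> ('m \<Rightarrow> 'a \<Rightarrow> 'a)
    \<Rightarrow> ('a \<Rightarrow> 'e::ab_group_add \<Rightarrow> 'e) \<Rightarrow> ('e \<Rightarrow> 'e \<Rightarrow> 'e) \<Rightarrow> ('e \<Rightarrow> 'e) \<Rightarrow> ('e \<Rightarrow> 'a \<Rightarrow> 'a)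
    \<Rightarrow> ('a \<Rightarrow> 'l::ab_group_add \<Rightarrow> 'l) \<Rightarrow> ('l \<Rightarrow> 'l \<Rightarrow> 'l) \<Rightarrow> ('l \<Rightarrow> 'l) \<Rightarrow> ('l \<Rightarrow> 'a \<Rightarrow> 'a)
    \<Rightarrow> ('m \<Rightarrow> 'e) \<Rightarrow> ('e \<Rightarrow> 'l) \<Rightarrow> bool" where
  "abelian_extension \<kappa> sM bM pM \<theta>M sE bE pE \<theta>E sL bL pL \<theta>L \<iota> \<pi> \<longleftrightarrow>
     restricted_LR \<kappa> sM bM pM \<theta>M \<and> restricted_LR \<kappa> sE bE pE \<theta>E \<and> restricted_LR \<kappa> sL bL pL \<theta>L \<and>
     LR_morphism sM bM pM \<theta>M sE bE pE \<theta>E \<iota> \<and> LR_morphism sE bE pE \<theta>E sL bL pL \<theta>L \<pi> \<and>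
     inj \<iota> \<and> surj \<pi> \<and> range \<iota> = {e. \<pi> e = 0}"

text \<open>Restricted Lie-Rinehart module (M, sM, rho) over (A, L, theta_L); End(M) = K-linear
endomorphisms with commutator bracket and squaring as 2-map.\<close>
definition restricted_LR_module :: "('k::field \<Rightarrow> 'a::comm_ring_1)
    \<Rightarrow> ('a \<Rightarrow> 'l::ab_group_add \<Rightarrow> 'l) \<Rightarrow> ('l \<Rightarrow> 'l \<Rightarrow> 'l) \<Rightarrow> ('l \<Rightarrow> 'l) \<Rightarrow> ('l \<Rightarrow> 'a \<Rightarrow> 'a)
    \<Rightarrow> ('a \<Rightarrow> 'm::ab_group_add \<Rightarrow> 'm) \<Rightarrow> ('l \<Rightarrow> 'm \<Rightarrow> 'm) \<Rightarrow> bool" where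
  "restricted_LR_module \<kappa> sL bL pL \<theta>L sM \<rho> \<longleftrightarrow>
     A_module sM \<and>
     (\<forall>x. K_linear \<kappa> sM sM (\<rho> x)) \<and>
     (\<forall>x y. \<rho> (x + y) = (\<lambda>m. \<rho> x m + \<rho> y m)) \<and>
     (\<forall>c x. \<rho> (sL (\<kappa> c) x) = (\<lambda>m. sM (\<kappa> c) (\<rho> x m))) \<and>
     (\<forall>x y. \<rho> (bL x y) = (\<lambda>m. \<rho> x (\<rho> y m) - \<rho> y (\<rho> x m))) \<and>
     (\<forall>x. \<rho> (pL x) = (\<lambda>m. \<rho> x (\<rho> x m))) \<and>
     (\<forall>x a m. \<rho> x (sM a m) = sM a (\<rho> x m) + sM (\<theta>L x a) m)"

end

theory Submission
  imports Defs
begin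

lemma add_diff_hom:
  assumes "\<forall>v w. f (v + w) = f v + f w"
  shows "f (a - b) = f a - f b" "f (0::'x::ab_group_add) = (0::'y::ab_group_add)"
proof -
  have "f a = f ((a - b) + b)" by simp
  also have "\<dots> = f (a - b) + f b" using assms by blast
  finally show "f (a - b) = f a - f b" by (simp add: algebra_simps)
  have "f 0 = f (0 + 0)" by simp
  also have "\<dots> = f 0 + f 0" using assms by blast
  finally show "f (0::'x) = (0::'y)" by simp
qed

lemma jac_aux:
  fixes a b c d x :: "'x::ab_group_add"
  assumes "a + b + c = 0" "b = - d" "x = - c"
  shows "x = a - d"
proof -
  have "a + b = - c" using assms(1) by (simp add: eq_neg_iff_add_eq_0)
  then show ?thesis using assms(2,3) by simp
qed

theorem mainTheorem8:
  fixes \<kappa> :: "'k::field \<Rightarrow> 'a::comm_ring_1"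
    and sM :: "'a \<Rightarrow> 'm::ab_group_add \<Rightarrow> 'm" and bM :: "'m \<Rightarrow> 'm \<Rightarrow> 'm" and pM :: "'m \<Rightarrow> 'm"
    and \<theta>M :: "'m \<Rightarrow> 'a \<Rightarrow> 'a"
    and sE :: "'a \<Rightarrow> 'e::ab_group_add \<Rightarrow> 'e" and bE :: "'e \<Rightarrow> 'e \<Rightarrow> 'e" and pE :: "'e \<Rightarrow> 'e"
    and \<theta>E :: "'e \<Rightarrow> 'a \<Rightarrow> 'a"
    and sL :: "'a \<Rightarrow> 'l::ab_group_add \<Rightarrow> 'l" and bL :: "'l \<Rightarrow> 'l \<Rightarrow> 'l" and pL :: "'l \<Rightarrow> 'l"
    and \<theta>L :: "'l \<Rightarrow> 'a \<Rightarrow> 'a"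
    and \<iota> :: "'m \<Rightarrow> 'e" and \<pi> :: "'e \<Rightarrow> 'l"
    and \<rho> :: "'l \<Rightarrow> 'm \<Rightarrow> 'm"
  assumes char2: "(2::'k) = 0"
    and alg: "K_algebra \<kappa>"
    and L: "restricted_LR \<kappa> sL bL pL \<theta>L"
    and M: "restricted_LR \<kappa> sM bM pM \<theta>M"
    and Mab: "strongly_abelian bM pM"
    and ext: "abelian_extension \<kappa> sM bM pM \<theta>M sE bE pE \<theta>E sL bL pL \<theta>L \<iota> \<pi>"
    and rho_def: "\<rho> = (\<lambda>x m. inv \<iota> (bE (SOME e. \<pi> e = x) (\<iota> m)))"
  shows "(\<forall>x e m. \<pi> e = x \<longrightarrow> \<iota> (\<rho> x m) = bE e (\<iota> m))
         \<and> restricted_LR_module \<kappa> sL bL pL \<theta>L sM \<rho>"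
proof -
  have E: "restricted_LR \<kappa> sE bE pE \<theta>E" and
    Im: "LR_morphism sM bM pM \<theta>M sE bE pE \<theta>E \<iota>" and
    Pm: "LR_morphism sE bE pE \<theta>E sL bL pL \<theta>L \<pi>" and
    inj: "inj \<iota>" and surj: "surj \<pi>" and ker: "range \<iota> = {e. \<pi> e = 0}"
    using ext unfolding abelian_extension_def by auto
  have i_add: "\<forall>v w. \<iota> (v + w) = \<iota> v + \<iota> w" and i_s: "\<And>a v. \<iota> (sM a v) = sE a (\<iota> v)"
    and i_b: "\<And>x y. \<iota> (bM x y) = bE (\<iota> x) (\<iota> y)"
    using Im unfolding LR_morphism_def A_linear_def by auto
  have p_add: "\<forall>v w. \<pi> (v + w) = \<pi> v + \<pi> w" and p_s: "\<And>a v. \<pi> (sE a v) = sL a (\<pi> v)"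
    and p_b: "\<And>x y. \<pi> (bE x y) = bL (\<pi> x) (\<pi> y)" and p_p: "\<And>x. \<pi> (pE x) = pL (\<pi> x)"
    and p_th: "\<And>x. \<theta>L (\<pi> x) = \<theta>E x"
    using Pm unfolding LR_morphism_def A_linear_def by auto
  have Eb_add1: "\<And>x y z. bE (x + y) z = bE x z + bE y z"
    and Eb_add2: "\<And>x y z. bE x (y + z) = bE x y + bE x z"
    and Eb_s1: "\<And>c x y. bE (sE (\<kappa> c) x) y = sE (\<kappa> c) (bE x y)"
    and Eb_s2: "\<And>c x y. bE x (sE (\<kappa> c) y) = sE (\<kappa> c) (bE x y)"
    and Eb_xx: "\<And>x. bE x x = 0"
    and Ejac: "\<And>x y z. bE x (bE y z) + bE y (bE z x) + bE z (bE x y) = 0"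
    and Ep: "\<And>x y. bE (pE x) y = bE x (bE x y)"
    and Eleib: "\<And>x a y. bE x (sE a y) = sE a (bE x y) + sE (\<theta>E x a) y"
    using E unfolding restricted_LR_def restricted_lie_def lie_algebra_def by auto
  have Lb0: "\<And>x. bL x 0 = 0"
  proof -
    fix x
    have "\<forall>x y z. bL x (y + z) = bL x y + bL x z"
      using L unfolding restricted_LR_def restricted_lie_def lie_algebra_def by auto
    hence "bL x (0 + 0) = bL x 0 + bL x 0" by blast
    then show "bL x 0 = 0" by simp
  qed
  have i0: "\<iota> 0 = 0" and i_diff: "\<And>a b. \<iota> (a - b) = \<iota> a - \<iota> b"
    using add_diff_hom[OF i_add] by auto
  have p_diff: "\<And>a b. \<pi> (a - b) = \<pi> a - \<pi> b"
    using add_diff_hom[OF p_add] by auto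
  have pi0: "\<And>m. \<pi> (\<iota> m) = 0" using ker by auto
  have Mb0: "\<And>m n. bM m n = 0" using Mab unfolding strongly_abelian_def by auto
  have Eb_diff1: "\<And>x y z. bE (x - y) z = bE x z - bE y z"
  proof -
    fix x y z
    have "bE x z = bE ((x - y) + y) z" by simp
    also have "\<dots> = bE (x - y) z + bE y z" by (rule Eb_add1)
    finally show "bE (x - y) z = bE x z - bE y z" by (simp add: algebra_simps)
  qed
  have Eb_diff2: "\<And>x y z. bE x (y - z) = bE x y - bE x z"
  proof -
    fix x y z
    have "bE x y = bE x ((y - z) + z)" by simp
    also have "\<dots> = bE x (y - z) + bE x z" by (rule Eb_add2)
    finally show "bE x (y - z) = bE x y - bE x z" by (simp add: algebra_simps)
  qed
  have Eb0: "\<And>x. bE x 0 = 0" using Eb_diff2[of _ 0 0] by simp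
  have Eanti: "\<And>x y. bE x y = - bE y x"
  proof -
    fix x y
    have "0 = bE (x + y) (x + y)" by (simp add: Eb_xx)
    also have "\<dots> = bE x x + bE y x + (bE x y + bE y y)" by (simp only: Eb_add1 Eb_add2)
    also have "\<dots> = bE x y + bE y x" by (simp add: Eb_xx)
    finally have "bE x y + bE y x = 0" by simp
    then show "bE x y = - bE y x" by (simp add: eq_neg_iff_add_eq_0)
  qed
  have F: "\<And>e m. \<iota> (\<rho> (\<pi> e) m) = bE e (\<iota> m)"
  proof -
    fix e m
    define e0 where "e0 = (SOME e'. \<pi> e' = \<pi> e)"
    have pe0: "\<pi> e0 = \<pi> e" unfolding e0_def by (rule someI) rule
    have "\<pi> (bE e0 (\<iota> m)) = 0" by (simp add: p_b pi0 Lb0)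
    hence inr: "bE e0 (\<iota> m) \<in> range \<iota>" using ker by auto
    have "\<pi> (e0 - e) = 0" by (simp add: p_diff pe0)
    hence "e0 - e \<in> range \<iota>" using ker by simp
    then obtain n where n: "e0 - e = \<iota> n" by blast
    have "bE (e0 - e) (\<iota> m) = \<iota> (bM n m)" by (simp add: n i_b)
    hence "bE (e0 - e) (\<iota> m) = 0" by (simp add: Mb0 i0)
    hence eq: "bE e0 (\<iota> m) = bE e (\<iota> m)" by (simp add: Eb_diff1)
    have "\<iota> (\<rho> (\<pi> e) m) = \<iota> (inv \<iota> (bE e0 (\<iota> m)))" unfolding rho_def e0_def by simp
    also have "\<dots> = bE e0 (\<iota> m)" using inr by (simp add: f_inv_into_f)
    finally show "\<iota> (\<rho> (\<pi> e) m) = bE e (\<iota> m)" using eq by simp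
  qed
  have iI: "\<And>m1 m2. \<iota> m1 = \<iota> m2 \<Longrightarrow> m1 = m2" using inj by (simp add: inj_eq)
  have lift: "\<And>x. \<exists>e. \<pi> e = x" using surj by (metis surjD)
  have part1: "\<forall>x e m. \<pi> e = x \<longrightarrow> \<iota> (\<rho> x m) = bE e (\<iota> m)" using F by blast
  have Amod: "A_module sM" using M unfolding restricted_LR_def by auto
  have Klin: "\<forall>x. K_linear \<kappa> sM sM (\<rho> x)"
    unfolding K_linear_def
  proof (intro allI conjI)
    fix x v w c
    obtain e where e: "\<pi> e = x" using lift by blast
    show "\<rho> x (v + w) = \<rho> x v + \<rho> x w"
      by (rule iI) (simp add: e[symmetric] F i_add Eb_add2)
    show "\<rho> x (sM (\<kappa> c) v) = sM (\<kappa> c) (\<rho> x v)"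
      by (rule iI) (simp add: e[symmetric] F i_s Eb_s2)
  qed
  have r_add: "\<forall>x y. \<rho> (x + y) = (\<lambda>m. \<rho> x m + \<rho> y m)"
  proof (intro allI HOL.ext)
    fix x y m
    obtain e where e: "\<pi> e = x" using lift by blast
    obtain e' where e': "\<pi> e' = y" using lift by blast
    have xy: "x + y = \<pi> (e + e')" using e e' p_add by simp
    show "\<rho> (x + y) m = \<rho> x m + \<rho> y m"
      unfolding xy by (intro iI) (simp add: e[symmetric] e'[symmetric] F i_add Eb_add1)
  qed
  have r_s: "\<forall>c x. \<rho> (sL (\<kappa> c) x) = (\<lambda>m. sM (\<kappa> c) (\<rho> x m))"
  proof (intro allI HOL.ext)
    fix c x m
    obtain e where e: "\<pi> e = x" using lift by blast
    have xy: "sL (\<kappa> c) x = \<pi> (sE (\<kappa> c) e)" using e p_s by simp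
    show "\<rho> (sL (\<kappa> c) x) m = sM (\<kappa> c) (\<rho> x m)"
      unfolding xy by (intro iI) (simp add: e[symmetric] F i_s Eb_s1)
  qed
  have r_b: "\<forall>x y. \<rho> (bL x y) = (\<lambda>m. \<rho> x (\<rho> y m) - \<rho> y (\<rho> x m))"
  proof (intro allI HOL.ext)
    fix x y m
    obtain e where e: "\<pi> e = x" using lift by blast
    obtain e' where e': "\<pi> e' = y" using lift by blast
    have xy: "bL x y = \<pi> (bE e e')" using e e' p_b by simp
    have jac: "bE (bE e e') z = bE e (bE e' z) - bE e' (bE e z)" for z
    proof -
      have "bE e (bE e' z) + bE e' (bE z e) + bE z (bE e e') = 0" by (rule Ejac)
      moreover have "bE e' (bE z e) = - bE e' (bE e z)"
        using Eanti[of z e] Eb_diff2[of e' 0 "bE e z"] by (simp add: Eb0)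
      moreover have "bE (bE e e') z = - bE z (bE e e')" by (rule Eanti)
      ultimately show ?thesis by (rule jac_aux)
    qed
    show "\<rho> (bL x y) m = \<rho> x (\<rho> y m) - \<rho> y (\<rho> x m)"
      unfolding xy by (rule iI) (simp add: e[symmetric] e'[symmetric] F i_diff jac)
  qed
  have r_p: "\<forall>x. \<rho> (pL x) = (\<lambda>m. \<rho> x (\<rho> x m))"
  proof (intro allI HOL.ext)
    fix x m
    obtain e where e: "\<pi> e = x" using lift by blast
    have xy: "pL x = \<pi> (pE e)" using e p_p by simp
    show "\<rho> (pL x) m = \<rho> x (\<rho> x m)"
      unfolding xy by (intro iI) (simp add: e[symmetric] F Ep)
  qed
  have r_l: "\<forall>x a m. \<rho> x (sM a m) = sM a (\<rho> x m) + sM (\<theta>L x a) m"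
  proof (intro allI)
    fix x a m
    obtain e where e: "\<pi> e = x" using lift by blast
    show "\<rho> x (sM a m) = sM a (\<rho> x m) + sM (\<theta>L x a) m"
      by (rule iI) (simp add: e[symmetric] F i_s i_add Eleib p_th)
  qed
  show ?thesis using part1 Amod Klin r_add r_s r_b r_p r_l
    unfolding restricted_LR_module_def by blast
qed

end
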